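(* Assume the setting described in the context. Let $\mathbf p\in\mathcal C^*$ and let $\mathbf K\in\mathbb N^t$ be its preferred factorization with respect to the factoring order $(\pi_1,\dots,\pi_t)$. Then $\mathbf K$ is the lexicographically largest element of the set $\{\mathbf K'\in\mathbb N^t: K'_1\pi_1+\cdots+K'_t\pi_t=\mathbf p\}$ of all factorizations of $\mathbf p$ into admissible primes.
   Context: $\mathbb N=\{0,1,2,\dots\}$. For a real $n\times n$ matrix $A$ and $f\in\mathbb R[[\mathbf x]]$ put $\mathcal D_Af(\mathbf x)=f'(\mathbf x)A\mathbf x$. Let $(\acute X,\acute Y,\acute Z)$ and $(\grave X,\grave Y,\grave Z)$ be $\mathfrak{sl}_2$ triads (i.e. $[X,Y]=Z,[Z,X]=2X,[Z,Y]=-2Y$) of real $n\times n$ resp. $m\times m$ matrices; set $\acute{\mathcal X}=\mathcal D_{\acute Y}$, $\acute{\mathcal Z}=\mathcal D_{\acute Z}$ on $\mathbb R[[\mathbf x]]$ and $\grave{\mathcal X}=\mathcal D_{\grave Y}$, $\grave{\mathcal Z}=\mathcal D_{\grave Z}$ on $\mathbb R[[\mathbf y]]$; $\acute{\mathcal J}=\ker\acute{\mathcal X}$, $\grave{\mathcal J}=\ker\grave{\mathcal X}$. A weight invariant is an element $f$ of $\acute{\mathcal J}$ (resp. $\grave{\mathcal J}$) with $\acute{\mathcal Z}f=\widehat ff$ (resp. $\grave{\mathcal Z}f=\widehat ff$). Let $\alpha=(\alpha_1,\dots,\alpha_p)$ be a Hilbert basis of $\acute{\mathcal J}$ (homogeneous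 weight invariants, weights $\widehat\alpha_i$, whose monomials $\alpha^{\mathbf k}$ span $\acute{\mathcal J}$ by countable linear combinations) and $\beta=(\beta_1,\dots,\beta_q)$ one of $\grave{\mathcal J}$ (weights $\widehat\beta_j$); $\widehat\alpha\mathbf k=\sum\widehat\alpha_ik_i$, $\widehat\beta\boldsymbol\ell=\sum\widehat\beta_j\ell_j$. Let $\acute A\subset\mathbb N^p$, $\grave A\subset\mathbb N^q$ be standard preferred sets: the monomials $\alpha^{\mathbf k}$, $\mathbf k\in\acute A$, are pairwise distinct, linearly independent and span $\acute{\mathcal J}$ by countable linear combinations, and $\acute A$ is closed under passing to componentwise smaller vectors in $\mathbb N^p$; likewise for $\grave A$. Transvectant cone $\mathcal C=\{(\mathbf k;\boldsymbol\ell;s)\in\mathbb N^{p+q+1}:s\le\widehat\alpha\mathbf k,\ s\le\widehat\beta\boldsymbol\ell\}$; $\mathcal C^*=\{(\mathbf k;\boldsymbol\ell;s)\in\mathcal C:\mathbf k\in\acute A,\boldsymbol\ell\in\grave A\}$. A prime is a nonzero element of $\mathcal C$ not a sum of two nonzero elements of $\mathcal C$; $\Pi^*=\{\pi_1,\dots,\pi_t\}$ is the set of primes lying in $\mathcal C^*$, listed in a fixed order (the factoring order). The preferred factorization of $\mathbf p\in\mathcal C^*$ is the vector $\mathbf K\in\mathbb N^t$ obtained greedily: $K_1=\max\{j\in\mathbb N:\mathbf p-j\pi_1\in\mathcal C\}$, and for $i=2,\dots,t$, $K_i=\max\{j:\mathbf p-K_1\pi_1-\cdots-K_{i-1}\pi_{i-1}-j\pi_i\in\mathcal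 C\}$ (one has $\sum K_i\pi_i=\mathbf p$). Lexicographic order on $\mathbb N^t$ compares the first differing entry. *)

theory Defs
  imports Main
begin

text \<open>Elements of \<open>\<nat>^(p+q+1)\<close> are represented as triples \<open>(k, l, s)\<close> where
  \<open>k\<close> and \<open>l\<close> are functions \<open>nat \<Rightarrow> nat\<close> (supported on \<open>{..<p}\<close> resp. \<open>{..<q}\<close>)
  and \<open>s\<close> is a natural number.\<close>

type_synonym cvec = "(nat \<Rightarrow> nat) \<times> (nat \<Rightarrow> nat) \<times> nat"

definition czero :: cvec where
  "czero = (\<lambda>_. 0, \<lambda>_. 0, 0)"

definition cadd :: "cvec \<Rightarrow> cvec \<Rightarrow> cvec" where
  "cadd a b = (\<lambda>i. fst a i + fst b i, \<lambda>j. fst (snd a) j + fst (snd b) j,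
               snd (snd a) + snd (snd b))"

definition csmul :: "nat \<Rightarrow> cvec \<Rightarrow> cvec" where
  "csmul c a = (\<lambda>i. c * fst a i, \<lambda>j. c * fst (snd a) j, c * snd (snd a))"

text \<open>Componentwise truncated subtraction (only used when the result is exact).\<close>
definition csub :: "cvec \<Rightarrow> cvec \<Rightarrow> cvec" where
  "csub a b = (\<lambda>i. fst a i - fst b i, \<lambda>j. fst (snd a) j - fst (snd b) j,
               snd (snd a) - snd (snd b))"

definition wdeg :: "nat \<Rightarrow> (nat \<Rightarrow> nat) \<Rightarrow> (nat \<Rightarrow> nat) \<Rightarrow> nat" where
  "wdeg n w k = (\<Sum>i<n. w i * k i)"

definition tcone :: "nat \<Rightarrow> nat \<Rightarrow> (nat \<Rightarrow> nat) \<Rightarrow> (nat \<Rightarrow> nat) \<Rightarrow> cvec set" where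
  "tcone p q wa wb = {(k, l, s). (\<forall>i\<ge>p. k i = 0) \<and> (\<forall>j\<ge>q. l j = 0) \<and>
                                 s \<le> wdeg p wa k \<and> s \<le> wdeg q wb l}"

definition tcone_star :: "nat \<Rightarrow> nat \<Rightarrow> (nat \<Rightarrow> nat) \<Rightarrow> (nat \<Rightarrow> nat) \<Rightarrow>
    (nat \<Rightarrow> nat) set \<Rightarrow> (nat \<Rightarrow> nat) set \<Rightarrow> cvec set" where
  "tcone_star p q wa wb Aa Ab = {x \<in> tcone p q wa wb. fst x \<in> Aa \<and> fst (snd x) \<in> Ab}"

definition is_prime_in :: "cvec set \<Rightarrow> cvec \<Rightarrow> bool" where
  "is_prime_in C x \<longleftrightarrow> x \<in> C \<and> x \<noteq> czero \<and>
     \<not> (\<exists>a\<in>C. \<exists>b\<in>C. a \<noteq> czero \<and> b \<noteq> czero \<and> x = cadd a b)"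

text \<open>Downward closed subset of \<open>\<nat>^n\<close> (the order property of a standard preferred set).\<close>
definition down_closed_in :: "nat \<Rightarrow> (nat \<Rightarrow> nat) set \<Rightarrow> bool" where
  "down_closed_in n A \<longleftrightarrow> (\<forall>k\<in>A. \<forall>i\<ge>n. k i = 0) \<and>
     (\<forall>k\<in>A. \<forall>k'. (\<forall>i. k' i \<le> k i) \<longrightarrow> k' \<in> A)"

fun pref_fact :: "cvec set \<Rightarrow> cvec list \<Rightarrow> cvec \<Rightarrow> nat list" where
  "pref_fact C [] x = []"
| "pref_fact C (\<pi> # \<pi>s) x =
     (let j = (GREATEST j. \<exists>r\<in>C. x = cadd r (csmul j \<pi>))
      in j # pref_fact C \<pi>s (csub x (csmul j \<pi>)))"

fun lincomb :: "nat list \<Rightarrow> cvec list \<Rightarrow> cvec" where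
  "lincomb (k # ks) (\<pi> # \<pi>s) = cadd (csmul k \<pi>) (lincomb ks \<pi>s)"
| "lincomb _ _ = czero"

definition factorizations :: "cvec list \<Rightarrow> cvec \<Rightarrow> nat list set" where
  "factorizations \<pi>s x = {K. length K = length \<pi>s \<and> lincomb K \<pi>s = x}"

definition lex_le :: "nat list \<Rightarrow> nat list \<Rightarrow> bool" where
  "lex_le K' K \<longleftrightarrow> K' = K \<or>
     (\<exists>i < length K. take i K' = take i K \<and> K' ! i < K ! i)"

end

theory Submission
  imports Defs
begin

definition sz :: "nat \<Rightarrow> nat \<Rightarrow> cvec \<Rightarrow> nat" where
  "sz p q r = (\<Sum>i<p. fst r i) + (\<Sum>j<q. fst (snd r) j) + snd (snd r)"

lemma sz_cadd: "sz p q (cadd a b) = sz p q a + sz p q b"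
  by (simp add: sz_def cadd_def sum.distrib)

lemma sz_csmul: "sz p q (csmul j a) = j * sz p q a"
  by (simp add: sz_def csmul_def sum_distrib_left algebra_simps)

lemma wdeg_add: "wdeg n w (\<lambda>i. k i + k' i) = wdeg n w k + wdeg n w k'"
  by (simp add: wdeg_def sum.distrib algebra_simps)

lemma wdeg_smul: "wdeg n w (\<lambda>i. j * k i) = j * wdeg n w k"
  by (simp add: wdeg_def sum_distrib_left algebra_simps)

lemma czero_in: "czero \<in> tcone p q wa wb"
  by (simp add: czero_def tcone_def wdeg_def)

lemma cadd_in: "a \<in> tcone p q wa wb \<Longrightarrow> b \<in> tcone p q wa wb \<Longrightarrow> cadd a b \<in> tcone p q wa wb"
  by (auto simp: tcone_def cadd_def wdeg_add)

lemma csmul_in: "a \<in> tcone p q wa wb \<Longrightarrow> csmul j a \<in> tcone p q wa wb"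
  by (auto simp: tcone_def csmul_def wdeg_smul)

lemma sz_zero: "r \<in> tcone p q wa wb \<Longrightarrow> sz p q r = 0 \<longleftrightarrow> r = czero"
proof
  assume r: "r \<in> tcone p q wa wb" and s: "sz p q r = 0"
  obtain k l s0 where rr: "r = (k, l, s0)" by (cases r) auto
  have "\<forall>i<p. k i = 0" "\<forall>j<q. l j = 0" "s0 = 0" using s by (auto simp: sz_def rr)
  moreover have "\<forall>i\<ge>p. k i = 0" "\<forall>j\<ge>q. l j = 0" using r by (auto simp: tcone_def rr)
  ultimately have "k = (\<lambda>_. 0)" "l = (\<lambda>_. 0)"
    by (metis not_le)+
  then show "r = czero" using \<open>s0 = 0\<close> by (simp add: rr czero_def)
next
  assume "r = czero" then show "sz p q r = 0" by (simp add: sz_def czero_def)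
qed

lemma cadd_comm: "cadd a b = cadd b a"
  by (simp add: cadd_def add.commute)

lemma cadd_assoc: "cadd (cadd a b) c = cadd a (cadd b c)"
  by (simp add: cadd_def add.assoc)

lemma cadd_czero: "cadd a czero = a"
  by (simp add: cadd_def czero_def)

lemma decomp:
  assumes "r \<in> tcone p q wa wb" "r \<noteq> czero"
  shows "\<exists>\<pi> r'. is_prime_in (tcone p q wa wb) \<pi> \<and> r' \<in> tcone p q wa wb \<and> r = cadd \<pi> r'"
  using assms
proof (induction "sz p q r" arbitrary: r rule: less_induct)
  case less
  show ?case
  proof (cases "is_prime_in (tcone p q wa wb) r")
    case True
    show ?thesis by (rule exI[of _ r], rule exI[of _ czero]) (simp add: True czero_in cadd_czero)
  next
    case False
    then obtain a b where ab: "a \<in> tcone p q wa wb" "b \<in> tcone p q wa wb" "a \<noteq> czero" "b \<noteq> czero"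
      "r = cadd a b" using less.prems by (auto simp: is_prime_in_def)
    have "sz p q b > 0" using ab sz_zero by blast
    then have "sz p q a < sz p q r" using ab sz_cadd by simp
    then obtain \<pi> a' where "is_prime_in (tcone p q wa wb) \<pi>" "a' \<in> tcone p q wa wb" "a = cadd \<pi> a'"
      using less.hyps ab by blast
    then show ?thesis using ab cadd_in cadd_assoc by metis
  qed
qed

lemma bound:
  assumes "\<pi> \<in> tcone p q wa wb" "\<pi> \<noteq> czero" "x = cadd r (csmul j \<pi>)"
  shows "j \<le> sz p q x"
proof -
  have "sz p q \<pi> \<ge> 1" using assms sz_zero by (metis less_one not_le)
  then have "j \<le> j * sz p q \<pi>" by simp
  also have "\<dots> \<le> sz p q x" using assms by (simp add: sz_cadd sz_csmul)
  finally show ?thesis .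
qed

lemma csub_cadd: "csub (cadd r a) a = r"
  by (simp add: csub_def cadd_def)

lemma down_fst:
  assumes "down_closed_in p Aa" "fst (cadd a b) \<in> Aa"
  shows "fst a \<in> Aa"
  using assms unfolding down_closed_in_def cadd_def by (auto)

lemma down_snd:
  assumes "down_closed_in q Ab" "fst (snd (cadd a b)) \<in> Ab"
  shows "fst (snd a) \<in> Ab"
  using assms unfolding down_closed_in_def cadd_def by (auto)

lemma lex_cons: "lex_le xs ys \<Longrightarrow> lex_le (a # xs) (a # ys)"
  unfolding lex_le_def
  apply (elim disjE)
   apply simp
  apply (erule exE)
  subgoal for i by (rule disjI2, rule exI[of _ "Suc i"]) auto
  done

lemma lex_less: "k' < j \<Longrightarrow> lex_le (k' # xs) (j # ys)"
  unfolding lex_le_def by (rule disjI2, rule exI[of _ 0]) auto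

lemma lincomb_in:
  assumes "set \<pi>s \<subseteq> tcone p q wa wb"
  shows "lincomb K \<pi>s \<in> tcone p q wa wb"
  using assms
proof (induction K \<pi>s rule: lincomb.induct)
  case (1 k ks \<pi> \<pi>s)
  then show ?case by (simp add: cadd_in csmul_in)
qed (auto simp: czero_in)

lemma maximal:
  assumes "set \<pi>s \<subseteq> tcone p q wa wb" "\<forall>\<pi>\<in>set \<pi>s. \<pi> \<noteq> czero"
    and "K' \<in> factorizations \<pi>s x"
  shows "lex_le K' (pref_fact (tcone p q wa wb) \<pi>s x)"
  using assms
proof (induction \<pi>s arbitrary: x K')
  case Nil
  then show ?case by (simp add: factorizations_def lex_le_def)
next
  case (Cons \<pi> \<pi>s)
  let ?C = "tcone p q wa wb"
  from Cons.prems obtain k' ks' where K': "K' = k' # ks'" "length ks' = length \<pi>s"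
    "x = cadd (csmul k' \<pi>) (lincomb ks' \<pi>s)"
    by (cases K') (auto simp: factorizations_def)
  define P where "P = (\<lambda>j. \<exists>r\<in>?C. x = cadd r (csmul j \<pi>))"
  have pi: "\<pi> \<in> ?C" "\<pi> \<noteq> czero" using Cons.prems by auto
  have Lin: "lincomb ks' \<pi>s \<in> ?C" using lincomb_in Cons.prems by simp
  have Pk: "P k'" unfolding P_def K'(3) by (rule bexI[OF cadd_comm Lin])
  have bnd: "\<And>y. P y \<Longrightarrow> y \<le> sz p q x" unfolding P_def using bound pi by blast
  define j where "j = Greatest P"
  have kj: "k' \<le> j" unfolding j_def using Greatest_le_nat[of P k' "sz p q x", OF Pk bnd] .
  have pf: "pref_fact ?C (\<pi> # \<pi>s) x = j # pref_fact ?C \<pi>s (csub x (csmul j \<pi>))"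
    by (simp add: j_def P_def Let_def)
  show ?case
  proof (cases "k' < j")
    case True then show ?thesis using pf K' lex_less by simp
  next
    case False
    then have "k' = j" using kj by simp
    have "csub x (csmul j \<pi>) = lincomb ks' \<pi>s"
      using K' \<open>k' = j\<close> csub_cadd cadd_comm by metis
    then have "lex_le ks' (pref_fact ?C \<pi>s (csub x (csmul j \<pi>)))"
      using Cons.IH[of ks'] Cons.prems K' by (simp add: factorizations_def)
    then show ?thesis using pf K' \<open>k' = j\<close> lex_cons by simp
  qed
qed

lemma existence:
  assumes "down_closed_in p Aa" "down_closed_in q Ab"
    and P: "P = {\<pi> \<in> tcone_star p q wa wb Aa Ab. is_prime_in (tcone p q wa wb) \<pi>}"
    and "set \<pi>s \<subseteq> P"
    and "x \<in> tcone p q wa wb" "fst x \<in> Aa" "fst (snd x) \<in> Ab"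
    and "\<forall>\<pi>\<in>P - set \<pi>s. \<not> (\<exists>r\<in>tcone p q wa wb. x = cadd r \<pi>)"
  shows "pref_fact (tcone p q wa wb) \<pi>s x \<in> factorizations \<pi>s x"
  using assms(4-)
proof (induction \<pi>s arbitrary: x)
  case Nil
  let ?C = "tcone p q wa wb"
  have "x = czero"
  proof (rule ccontr)
    assume "x \<noteq> czero"
    then obtain \<pi> r' where pr: "is_prime_in ?C \<pi>" "r' \<in> ?C" "x = cadd \<pi> r'"
      using decomp Nil.prems by blast
    have "fst \<pi> \<in> Aa" "fst (snd \<pi>) \<in> Ab"
      using down_fst[OF assms(1)] down_snd[OF assms(2)] pr Nil.prems by auto
    then have "\<pi> \<in> P" using pr by (auto simp: P tcone_star_def is_prime_in_def)
    then show False using Nil.prems pr cadd_comm by auto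
  qed
  then show ?case by (simp add: factorizations_def czero_def)
next
  case (Cons \<pi> \<pi>s)
  let ?C = "tcone p q wa wb"
  define Q where "Q = (\<lambda>j. \<exists>r\<in>?C. x = cadd r (csmul j \<pi>))"
  have pi: "\<pi> \<in> ?C" "\<pi> \<noteq> czero" using Cons.prems P by (auto simp: tcone_star_def is_prime_in_def)
  have Q0: "Q 0" unfolding Q_def using Cons.prems
    by (auto intro!: bexI[of _ x] simp: cadd_def csmul_def)
  have bnd: "\<And>y. Q y \<Longrightarrow> y \<le> sz p q x" unfolding Q_def using bound pi by blast
  define j where "j = Greatest Q"
  have Qj: "Q j" unfolding j_def using GreatestI_nat[of Q 0 "sz p q x", OF Q0 bnd] .
  have jmax: "\<And>y. Q y \<Longrightarrow> y \<le> j" unfolding j_def using Greatest_le_nat bnd by blast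
  obtain r where r: "r \<in> ?C" "x = cadd r (csmul j \<pi>)" using Qj Q_def by blast
  have pf: "pref_fact ?C (\<pi> # \<pi>s) x = j # pref_fact ?C \<pi>s r"
  proof -
    have "pref_fact ?C (\<pi> # \<pi>s) x = j # pref_fact ?C \<pi>s (csub x (csmul j \<pi>))"
      by (simp add: j_def Q_def Let_def)
    then show ?thesis using r(2) csub_cadd by simp
  qed
  have ra: "fst r \<in> Aa" "fst (snd r) \<in> Ab"
    using down_fst[OF assms(1)] down_snd[OF assms(2)] r Cons.prems by auto
  have nr: "\<forall>\<pi>'\<in>P - set \<pi>s. \<not> (\<exists>r'\<in>?C. r = cadd r' \<pi>')"
  proof (intro ballI notI)
    fix \<pi>' assume \<pi>': "\<pi>' \<in> P - set \<pi>s" and "\<exists>r'\<in>?C. r = cadd r' \<pi>'"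
    then obtain r' where r': "r' \<in> ?C" "r = cadd r' \<pi>'" by blast
    show False
    proof (cases "\<pi>' = \<pi>")
      case True
      have "x = cadd r' (csmul (Suc j) \<pi>)" using r r' True
        by (simp add: cadd_def csmul_def algebra_simps)
      then have "Q (Suc j)" using r' Q_def by blast
      then show False using jmax by fastforce
    next
      case False
      have "x = cadd (cadd r' (csmul j \<pi>)) \<pi>'" using r r' by (metis cadd_assoc cadd_comm)
      moreover have "cadd r' (csmul j \<pi>) \<in> ?C" using r' pi cadd_in csmul_in by blast
      ultimately show False using Cons.prems(5) \<pi>' False by auto
    qed
  qed
  have "pref_fact ?C \<pi>s r \<in> factorizations \<pi>s r"
  proof (rule Cons.IH)
    show "set \<pi>s \<subseteq> P" using Cons.prems(1) by simp
  qed (use r ra nr in auto)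
  then have "length (pref_fact ?C \<pi>s r) = length \<pi>s" "lincomb (pref_fact ?C \<pi>s r) \<pi>s = r"
    by (simp_all add: factorizations_def)
  moreover have "cadd (csmul j \<pi>) r = x" using r(2) cadd_comm by metis
  ultimately show ?case unfolding pf factorizations_def by simp
qed

theorem theorem11p8:
  fixes p q :: nat and wa wb :: "nat \<Rightarrow> nat"
    and Aa Ab :: "(nat \<Rightarrow> nat) set" and \<pi>s :: "cvec list" and x :: cvec
  assumes "down_closed_in p Aa" and "down_closed_in q Ab"
    and "distinct \<pi>s"
    and "set \<pi>s = {\<pi> \<in> tcone_star p q wa wb Aa Ab. is_prime_in (tcone p q wa wb) \<pi>}"
    and "x \<in> tcone_star p q wa wb Aa Ab"
  shows "pref_fact (tcone p q wa wb) \<pi>s x \<in> factorizations \<pi>s x \<and>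
         (\<forall>K' \<in> factorizations \<pi>s x. lex_le K' (pref_fact (tcone p q wa wb) \<pi>s x))"
proof
  show "pref_fact (tcone p q wa wb) \<pi>s x \<in> factorizations \<pi>s x"
  proof (rule existence[OF assms(1,2) refl])
    show "set \<pi>s \<subseteq> {\<pi> \<in> tcone_star p q wa wb Aa Ab. is_prime_in (tcone p q wa wb) \<pi>}"
      using assms(4) by simp
    show "x \<in> tcone p q wa wb" "fst x \<in> Aa" "fst (snd x) \<in> Ab"
      using assms(5) by (simp_all add: tcone_star_def)
    show "\<forall>\<pi>\<in>{\<pi> \<in> tcone_star p q wa wb Aa Ab. is_prime_in (tcone p q wa wb) \<pi>} - set \<pi>s.
        \<not> (\<exists>r\<in>tcone p q wa wb. x = cadd r \<pi>)"
      using assms(4) by simp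
  qed
  have "set \<pi>s \<subseteq> tcone p q wa wb" "\<forall>\<pi>\<in>set \<pi>s. \<pi> \<noteq> czero"
    using assms(4) by (auto simp: tcone_star_def is_prime_in_def)
  then show "\<forall>K' \<in> factorizations \<pi>s x. lex_le K' (pref_fact (tcone p q wa wb) \<pi>s x)"
    using maximal[of \<pi>s p q wa wb] by blast
qed

end
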